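(* For each $\tau>0$ let $t_\tau\in\mathbb R$ be arbitrary and set $\xi_\tau(s)=\big(\phi_\tau^2+\tau^2/\phi_\tau^2\big)(s-t_\tau)$. Then for every sequence $\tau_n\to0$ there is a subsequence along which $\xi_{\tau_n}$ converges uniformly on compact subsets of $\mathbb R$ either to the function $s\mapsto(\cosh(s-s_0))^{-2}$ for some $s_0\in\mathbb R$, or to $0$.
   Context: $\phi_\tau$ is the unique smooth, periodic, non-constant solution of $\dot\phi^2+(\phi^2-\tau)^2=\phi^2$ taking its minimum value at $s=0$. *)

theory Defs
  imports "HOL-Analysis.Analysis"
begin

definition smooth_fun :: "(real \<Rightarrow> real) \<Rightarrow> bool" where
  "smooth_fun f \<longleftrightarrow> (\<forall>k x. ((deriv ^^ k) f) differentiable (at x))"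

definition periodic_fun :: "(real \<Rightarrow> real) \<Rightarrow> bool" where
  "periodic_fun f \<longleftrightarrow> (\<exists>T>0. \<forall>s. f (s + T) = f s)"

definition is_phi :: "real \<Rightarrow> (real \<Rightarrow> real) \<Rightarrow> bool" where
  "is_phi \<tau> \<phi> \<longleftrightarrow> smooth_fun \<phi> \<and> periodic_fun \<phi> \<and> (\<exists>a b. \<phi> a \<noteq> \<phi> b)
     \<and> (\<forall>s. (deriv \<phi> s)\<^sup>2 + ((\<phi> s)\<^sup>2 - \<tau>)\<^sup>2 = (\<phi> s)\<^sup>2)
     \<and> (\<forall>s. \<phi> 0 \<le> \<phi> s)"

definition xi :: "real \<Rightarrow> (real \<Rightarrow> real) \<Rightarrow> real \<Rightarrow> real \<Rightarrow> real" where
  "xi \<tau> \<phi> t s = (\<phi> (s - t))\<^sup>2 + \<tau>\<^sup>2 / (\<phi> (s - t))\<^sup>2"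

definition unif_compact_conv :: "(nat \<Rightarrow> real \<Rightarrow> real) \<Rightarrow> (real \<Rightarrow> real) \<Rightarrow> bool" where
  "unif_compact_conv f g \<longleftrightarrow> (\<forall>K. compact K \<longrightarrow> uniform_limit K f g sequentially)"

end

theory Submission
  imports Defs
begin

lemma phi_basic:
  assumes ph: "is_phi \<sigma> \<phi>" and sp: "\<sigma> > 0"
  shows "\<forall>x. \<phi> x \<noteq> 0"
    and "\<forall>x. (\<phi> has_real_derivative deriv \<phi> x) (at x)"
    and "\<forall>x. (deriv \<phi> has_real_derivative \<phi> x * (1 + 2*\<sigma> - 2*(\<phi> x)\<^sup>2)) (at x)"
    and "\<forall>x. (deriv \<phi> x)\<^sup>2 + ((\<phi> x)\<^sup>2 - \<sigma>)\<^sup>2 = (\<phi> x)\<^sup>2"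
proof -
  define p1 where "p1 = deriv \<phi>"
  define p2 where "p2 = deriv p1"
  have sm: "smooth_fun \<phi>" and nc: "\<exists>a b. \<phi> a \<noteq> \<phi> b"
    and eq: "\<forall>s. (p1 s)\<^sup>2 + ((\<phi> s)\<^sup>2 - \<sigma>)\<^sup>2 = (\<phi> s)\<^sup>2"
    using ph unfolding is_phi_def p1_def by auto
  have d0: "\<phi> differentiable at x" for x using sm unfolding smooth_fun_def
    by (metis funpow_0)
  have d1: "p1 differentiable at x" for x using sm unfolding smooth_fun_def p1_def
    by (metis funpow_0 funpow_Suc_right o_apply)
  have d2: "p2 differentiable at x" for x using sm unfolding smooth_fun_def p1_def p2_def
    by (metis One_nat_def funpow_0 funpow_Suc_right o_apply)
  have D0: "(\<phi> has_real_derivative p1 x) (at x)" for x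
    using d0 unfolding p1_def by (simp add: DERIV_deriv_iff_real_differentiable)
  have D1: "(p1 has_real_derivative p2 x) (at x)" for x
    using d1 unfolding p2_def by (simp add: DERIV_deriv_iff_real_differentiable)
  have C0: "isCont \<phi> x" for x using D0 DERIV_isCont by blast
  have C1: "isCont p1 x" for x using D1 DERIV_isCont by blast
  have C2: "isCont p2 x" for x using d2 differentiable_imp_continuous_within by blast
  have nz: "\<phi> x \<noteq> 0" for x
  proof
    assume "\<phi> x = 0"
    with eq have "(p1 x)\<^sup>2 + \<sigma>\<^sup>2 = 0" by (metis diff_0 power2_minus zero_power2 add_0)
    with sp show False by (smt (verit) zero_le_power2 power2_less_0 zero_less_power2)
  qed
  define H where "H = (\<lambda>p::real. p * (1 + 2*\<sigma> - 2*p\<^sup>2))"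
  have key: "p2 x = H (\<phi> x)" if "p1 x \<noteq> 0" for x
  proof -
    have A: "((\<lambda>x. (p1 x)\<^sup>2 + ((\<phi> x)\<^sup>2 - \<sigma>)\<^sup>2 - (\<phi> x)\<^sup>2) has_real_derivative
       2*p1 x*p2 x + 2*((\<phi> x)\<^sup>2 - \<sigma>)*(2*\<phi> x*p1 x) - 2*\<phi> x*p1 x) (at x)"
      by (rule derivative_eq_intros D0 D1 refl | simp)+
    have B: "((\<lambda>x. (p1 x)\<^sup>2 + ((\<phi> x)\<^sup>2 - \<sigma>)\<^sup>2 - (\<phi> x)\<^sup>2) has_real_derivative 0) (at x)"
      using eq by simp
    have "2*p1 x*p2 x + 2*((\<phi> x)\<^sup>2 - \<sigma>)*(2*\<phi> x*p1 x) - 2*\<phi> x*p1 x = 0"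
      using DERIV_unique[OF A B] .
    then have "p1 x * (p2 x - H (\<phi> x)) = 0" unfolding H_def by (simp add: algebra_simps power2_eq_square)
    with that show ?thesis by simp
  qed
  define Z where "Z = {x. p2 x \<noteq> H (\<phi> x)}"
  have oZ: "open Z" unfolding Z_def H_def
    by (intro open_Collect_neq continuous_intros) (auto simp: continuous_on_eq_continuous_at C0 C2)
  have ZC: "Z \<subseteq> {x. p1 x = 0 \<and> p2 x = 0}"
  proof
    fix x assume xZ: "x \<in> Z"
    have z1: "p1 y = 0" if "y \<in> Z" for y using key that unfolding Z_def by blast
    have "((\<lambda>_. 0) has_real_derivative p2 x) (at x)"
      by (rule has_field_derivative_transform_within_open[OF D1 oZ xZ]) (simp add: z1)
    then have "p2 x = 0" using DERIV_unique DERIV_const by blast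
    then show "x \<in> {x. p1 x = 0 \<and> p2 x = 0}" using z1 xZ by simp
  qed
  have cC: "closed {x. p1 x = 0 \<and> p2 x = 0}"
    by (intro closed_Collect_conj closed_Collect_eq continuous_intros)
       (auto simp: continuous_on_eq_continuous_at C1 C2)
  have clZ: "closure Z \<subseteq> {x. p1 x = 0 \<and> p2 x = 0}"
    using closure_minimal[OF ZC cC] .
  have "Z \<noteq> UNIV"
  proof
    assume "Z = UNIV"
    then have "\<forall>x. (\<phi> has_real_derivative 0) (at x)" using ZC D0 by (metis (mono_tags, lifting) UNIV_I mem_Collect_eq subset_iff)
    then have "\<phi> a = \<phi> b" for a b using DERIV_isconst_all by blast
    with nc show False by blast
  qed
  have Ze: "Z = {}"
  proof (rule ccontr)
    assume "Z \<noteq> {}"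
    with \<open>Z \<noteq> UNIV\<close> oZ clopen have "\<not> closed Z" by blast
    then obtain a where a: "a \<in> closure Z" "a \<notin> Z" using closure_subset closure_closed
      by (metis closed_closure subset_antisym subsetI)
    then have "p1 a = 0" "p2 a = 0" using clZ by auto
    moreover have "p2 a = H (\<phi> a)" using a(2) unfolding Z_def by simp
    ultimately have h0: "\<phi> a * (1 + 2*\<sigma> - 2*(\<phi> a)\<^sup>2) = 0"
      unfolding H_def by simp
    have e0: "((\<phi> a)\<^sup>2 - \<sigma>)\<^sup>2 = (\<phi> a)\<^sup>2" using eq[rule_format, of a] \<open>p1 a = 0\<close> by simp
    have "2*(\<phi> a)\<^sup>2 = 1 + 2*\<sigma>" using h0 nz[of a] by simp
    then have "(\<phi> a)\<^sup>2 - \<sigma> = 1/2" by simp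
    with e0 have "(1/2)\<^sup>2 = (\<phi> a)\<^sup>2" by simp
    with \<open>2*(\<phi> a)\<^sup>2 = 1 + 2*\<sigma>\<close> have "(1/2)\<^sup>2 = (1 + 2*\<sigma>)/2" by simp
    with sp show False by (simp add: power2_eq_square)
  qed
  show "\<forall>x. \<phi> x \<noteq> 0" using nz by blast
  show "\<forall>x. (\<phi> has_real_derivative deriv \<phi> x) (at x)" using D0 p1_def by blast
  show "\<forall>x. (deriv \<phi> has_real_derivative \<phi> x * (1 + 2*\<sigma> - 2*(\<phi> x)\<^sup>2)) (at x)"
    using D1 Ze unfolding Z_def H_def p1_def by auto
  show "\<forall>x. (deriv \<phi> x)\<^sup>2 + ((\<phi> x)\<^sup>2 - \<sigma>)\<^sup>2 = (\<phi> x)\<^sup>2" using eq p1_def by blast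
qed
definition Gt :: "real \<Rightarrow> real \<Rightarrow> real" where
  "Gt \<sigma> y = 4*y*(1+2*\<sigma>) - 6*y\<^sup>2 + 8*\<sigma>\<^sup>2"

lemma X_props:
  assumes ph: "is_phi \<sigma> \<phi>" and sp: "\<sigma> > 0"
  defines "X \<equiv> (\<lambda>x. (\<phi> x)\<^sup>2 + \<sigma>\<^sup>2 / (\<phi> x)\<^sup>2)"
    and "X1 \<equiv> (\<lambda>x. 2*\<phi> x*deriv \<phi> x - 2*\<sigma>\<^sup>2*deriv \<phi> x/(\<phi> x)^3)"
  shows "(X has_real_derivative X1 x) (at x)"
    and "(X1 has_real_derivative Gt \<sigma> (X x)) (at x)"
    and "0 < X x \<and> X x \<le> 1 + 2*\<sigma>"
    and "(X1 x)\<^sup>2 = 4*((X x)\<^sup>2 - 4*\<sigma>\<^sup>2)*(1 + 2*\<sigma> - X x)"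
proof -
  note B = phi_basic[OF ph sp]
  have nz: "\<phi> x \<noteq> 0" using B(1) by blast
  have D0: "\<And>x. (\<phi> has_real_derivative deriv \<phi> x) (at x)" using B(2) by blast
  have D1: "\<And>x. (deriv \<phi> has_real_derivative \<phi> x * (1 + 2*\<sigma> - 2*(\<phi> x)\<^sup>2)) (at x)" using B(3) by blast
  have E: "(deriv \<phi> x)\<^sup>2 = (\<phi> x)\<^sup>2 - ((\<phi> x)\<^sup>2 - \<sigma>)\<^sup>2" using B(4) by (simp add: algebra_simps)
  show "(X has_real_derivative X1 x) (at x)"
    unfolding X_def X1_def
    apply (rule derivative_eq_intros D0 refl | simp add: nz)+
    using nz apply (simp add: field_simps)
    by algebra
  show "(X1 has_real_derivative Gt \<sigma> (X x)) (at x)"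
    unfolding X_def X1_def Gt_def
    apply (rule derivative_eq_intros D0 D1 refl | simp add: nz)+
    using nz apply (simp add: field_simps)
    using E by algebra
  have X1e: "1 + 2*\<sigma> - X x = (deriv \<phi> x)\<^sup>2 / (\<phi> x)\<^sup>2"
    unfolding X_def using E nz by (simp add: field_simps power2_eq_square)
  show "0 < X x \<and> X x \<le> 1 + 2*\<sigma>"
  proof -
    have "0 \<le> (deriv \<phi> x)\<^sup>2 / (\<phi> x)\<^sup>2" by simp
    then have "X x \<le> 1 + 2*\<sigma>" using X1e by linarith
    moreover have "0 < X x" unfolding X_def using nz by (simp add: add_pos_nonneg)
    ultimately show ?thesis by simp
  qed
  show "(X1 x)\<^sup>2 = 4*((X x)\<^sup>2 - 4*\<sigma>\<^sup>2)*(1 + 2*\<sigma> - X x)"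
    unfolding X1e unfolding X_def X1_def using nz apply (simp add: field_simps)
    using E by algebra
qed
lemma stab:
  fixes f f1 g g1 G1 G0 :: "real \<Rightarrow> real" and \<delta> x :: real
  assumes df: "\<And>x. (f has_real_derivative f1 x) (at x)"
      and df1: "\<And>x. (f1 has_real_derivative G1 (f x)) (at x)"
      and dg: "\<And>x. (g has_real_derivative g1 x) (at x)"
      and dg1: "\<And>x. (g1 has_real_derivative G0 (g x)) (at x)"
      and fb: "\<And>x. 0 \<le> f x \<and> f x \<le> 2" and gb: "\<And>x. 0 \<le> g x \<and> g x \<le> 2"
      and Gd: "\<And>y. 0 \<le> y \<Longrightarrow> y \<le> 2 \<Longrightarrow> \<bar>G1 y - G0 y\<bar> \<le> \<delta>"
      and GL: "\<And>y z. 0 \<le> y \<Longrightarrow> y \<le> 2 \<Longrightarrow> 0 \<le> z \<Longrightarrow> z \<le> 2 \<Longrightarrow> \<bar>G0 y - G0 z\<bar> \<le> 20*\<bar>y - z\<bar>"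
  shows "(f x - g x)\<^sup>2 + (f1 x - g1 x)\<^sup>2 \<le> ((f 0 - g 0)\<^sup>2 + (f1 0 - g1 0)\<^sup>2 + \<delta>\<^sup>2) * exp (22*\<bar>x\<bar>)"
proof -
  define w where "w y = (f y - g y)\<^sup>2 + (f1 y - g1 y)\<^sup>2" for y
  define w' where "w' y = 2*(f y - g y)*(f1 y - g1 y) + 2*(f1 y - g1 y)*(G1 (f y) - G0 (g y))" for y
  have Dw: "(w has_real_derivative w' y) (at y)" for y
    unfolding w_def w'_def
    by (rule derivative_eq_intros df df1 dg dg1 refl | simp)+ (simp add: algebra_simps)
  have dpos: "0 \<le> \<delta>" using Gd[of 0] by simp
  have wb: "\<bar>w' y\<bar> \<le> 22 * w y + \<delta>\<^sup>2" for y
  proof -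
    define e where "e = f y - g y"
    define e1 where "e1 = f1 y - g1 y"
    define D where "D = G1 (f y) - G0 (g y)"
    have "\<bar>D\<bar> \<le> \<bar>G1 (f y) - G0 (f y)\<bar> + \<bar>G0 (f y) - G0 (g y)\<bar>" unfolding D_def by linarith
    also have "\<dots> \<le> \<delta> + 20*\<bar>e\<bar>" unfolding e_def using Gd GL fb gb by (meson add_mono)
    finally have Db: "\<bar>D\<bar> \<le> \<delta> + 20*\<bar>e\<bar>" .
    have "\<bar>e1 * D\<bar> \<le> \<bar>e1\<bar> * (\<delta> + 20*\<bar>e\<bar>)" unfolding abs_mult
      by (rule mult_left_mono[OF Db]) simp
    moreover have "2*\<bar>e\<bar>*\<bar>e1\<bar> \<le> e\<^sup>2 + e1\<^sup>2"
      using sum_squares_bound[of "\<bar>e\<bar>" "\<bar>e1\<bar>"] by (simp add: power2_eq_square) 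
    moreover have "2*\<bar>e1\<bar>*\<delta> \<le> e1\<^sup>2 + \<delta>\<^sup>2"
      using sum_squares_bound[of "\<bar>e1\<bar>" "\<delta>"] dpos by (simp add: power2_eq_square)
    moreover have "\<bar>w' y\<bar> \<le> 2*\<bar>e\<bar>*\<bar>e1\<bar> + 2*\<bar>e1 * D\<bar>"
    proof -
      have "w' y = 2*e*e1 + 2*(e1*D)" unfolding w'_def e_def e1_def D_def by simp
      then have "\<bar>w' y\<bar> \<le> \<bar>2*e*e1\<bar> + \<bar>2*(e1*D)\<bar>" by linarith
      then show ?thesis by (simp add: abs_mult)
    qed
    moreover have "w y = e\<^sup>2 + e1\<^sup>2" unfolding w_def e_def e1_def by simp
    moreover have "\<bar>e1\<bar> * (\<delta> + 20*\<bar>e\<bar>) = \<bar>e1\<bar>*\<delta> + 20*(\<bar>e\<bar>*\<bar>e1\<bar>)" by (simp add: algebra_simps)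
    moreover have "0 \<le> e\<^sup>2" by simp
    ultimately have "\<bar>w' y\<bar> \<le> 22 * (e\<^sup>2 + e1\<^sup>2) + \<delta>\<^sup>2" by (simp only: mult.assoc distrib_left)
    then show ?thesis using \<open>w y = e\<^sup>2 + e1\<^sup>2\<close> by simp
  qed
  have w0: "0 \<le> w y" for y unfolding w_def by simp
  show ?thesis
  proof (cases "0 \<le> x")
    case True
    define h where "h y = (w y + \<delta>\<^sup>2/22) * exp (-22*y)" for y
    have "h x \<le> h 0"
    proof (rule DERIV_nonpos_imp_nonincreasing[OF True])
      fix y
      have "(h has_real_derivative w' y * exp (-22*y) + (w y + \<delta>\<^sup>2/22) * (exp (-22*y) * (-22))) (at y)"
        unfolding h_def by (rule derivative_eq_intros Dw refl | simp)+
      moreover have "w' y * exp (-22*y) + (w y + \<delta>\<^sup>2/22) * (exp (-22*y) * (-22)) \<le> 0"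
      proof -
        have "w' y \<le> 22 * w y + \<delta>\<^sup>2" using wb[of y] by linarith
        then have "w' y * exp (-22*y) \<le> (22 * w y + \<delta>\<^sup>2) * exp (-22*y)" by simp
        then show ?thesis by (simp add: algebra_simps)
      qed
      ultimately show "\<exists>d. (h has_real_derivative d) (at y) \<and> d \<le> 0" by blast
    qed
    then have "(w x + \<delta>\<^sup>2/22) \<le> (w 0 + \<delta>\<^sup>2/22) * exp (22*x)"
      unfolding h_def by (simp add: exp_minus field_simps)
    moreover have "(w 0 + \<delta>\<^sup>2/22) * exp (22*x) \<le> (w 0 + \<delta>\<^sup>2) * exp (22*x)" by simp
    moreover have "0 \<le> \<delta>\<^sup>2/22" by simp
    ultimately have "w x \<le> (w 0 + \<delta>\<^sup>2) * exp (22*x)" by linarith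
    then show ?thesis using True unfolding w_def by simp
  next
    case False
    then have xl: "x \<le> 0" by simp
    define h where "h y = (w y + \<delta>\<^sup>2/22) * exp (22*y)" for y
    have "h x \<le> h 0"
    proof (rule DERIV_nonneg_imp_nondecreasing[OF xl])
      fix y
      have "(h has_real_derivative w' y * exp (22*y) + (w y + \<delta>\<^sup>2/22) * (exp (22*y) * 22)) (at y)"
        unfolding h_def by (rule derivative_eq_intros Dw refl | simp)+
      moreover have "0 \<le> w' y * exp (22*y) + (w y + \<delta>\<^sup>2/22) * (exp (22*y) * 22)"
      proof -
        have "-(22 * w y + \<delta>\<^sup>2) \<le> w' y" using wb[of y] by linarith
        then have "-(22 * w y + \<delta>\<^sup>2) * exp (22*y) \<le> w' y * exp (22*y)" by simp
        then show ?thesis by (simp add: algebra_simps)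
      qed
      ultimately show "\<exists>d. (h has_real_derivative d) (at y) \<and> 0 \<le> d" by blast
    qed
    then have "(w x + \<delta>\<^sup>2/22) \<le> (w 0 + \<delta>\<^sup>2/22) * exp (-22*x)"
      unfolding h_def by (simp add: exp_minus field_simps)
    moreover have "(w 0 + \<delta>\<^sup>2/22) * exp (-22*x) \<le> (w 0 + \<delta>\<^sup>2) * exp (-22*x)" by simp
    moreover have "0 \<le> \<delta>\<^sup>2/22" by simp
    ultimately have "w x \<le> (w 0 + \<delta>\<^sup>2) * exp (-22*x)" by linarith
    then show ?thesis using xl unfolding w_def by simp
  qed
qed

lemma cosh_pos': "0 < cosh (x::real)" by (simp add: cosh_real_pos)

lemma sech_props:
  fixes s0 :: real
  defines "g \<equiv> (\<lambda>s. 1 / (cosh (s - s0))\<^sup>2)"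
    and "g1 \<equiv> (\<lambda>s. -2 * sinh (s - s0) / (cosh (s - s0))^3)"
  shows "(g has_real_derivative g1 x) (at x)"
    and "(g1 has_real_derivative Gt 0 (g x)) (at x)"
    and "0 \<le> g x \<and> g x \<le> 2"
proof -
  have c: "cosh (x - s0) \<noteq> 0" using cosh_pos'[of "x - s0"] by simp
  have cs: "(cosh (x - s0))\<^sup>2 = 1 + (sinh (x - s0))\<^sup>2" using cosh_square_eq[of "x - s0"] by simp
  show "(g has_real_derivative g1 x) (at x)" unfolding g_def g1_def
    apply (rule derivative_eq_intros refl | simp add: c)+
    using c by (simp add: field_simps eval_nat_numeral)
  show "(g1 has_real_derivative Gt 0 (g x)) (at x)" unfolding g_def g1_def Gt_def
    apply (rule derivative_eq_intros refl | simp add: c)+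
    using c apply (simp add: field_simps)
    using cs by algebra
  have "1 \<le> cosh (x - s0)" by (rule cosh_real_ge_1)
  then have "1 \<le> (cosh (x - s0))\<^sup>2" by (simp add: one_le_power)
  then have "1 / (cosh (x - s0))\<^sup>2 \<le> 1" by simp
  moreover have "0 \<le> 1 / (cosh (x - s0))\<^sup>2" by simp
  ultimately show "0 \<le> g x \<and> g x \<le> 2" unfolding g_def by linarith
qed

lemma sech_data:
  fixes a b :: real
  assumes a: "0 < a" "a \<le> 1" and b: "b\<^sup>2 = 4*a\<^sup>2*(1-a)"
  shows "\<exists>s0. 1 / (cosh (0 - s0))\<^sup>2 = a \<and> -2 * sinh (0 - s0) / (cosh (0 - s0))^3 = b"
proof -
  define c where "c = arcosh (1 / sqrt a)"
  have ge: "1 \<le> 1 / sqrt a" using a by (simp add: real_sqrt_le_1_iff)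
  have cc: "cosh c = 1 / sqrt a" unfolding c_def using cosh_arcosh_real[OF ge] .
  have c0: "0 \<le> c" unfolding c_def using arcosh_nonneg_real[OF ge] .
  have cc2: "(cosh c)\<^sup>2 = 1 / a" using cc a by (simp add: power_divide)
  have sn: "0 \<le> sinh c" using c0 by simp
  have ss: "(sinh c)\<^sup>2 = 1/a - 1" using cosh_square_eq[of c] cc2 by simp
  have val: "2 * sinh c / (cosh c)^3 = \<bar>b\<bar>"
  proof -
    have "(2 * sinh c / (cosh c)^3)\<^sup>2 = 4 * (sinh c)\<^sup>2 / ((cosh c)\<^sup>2)^3"
      by (simp add: power_divide power_mult_distrib flip: power_mult)
    also have "\<dots> = 4*a\<^sup>2*(1-a)" unfolding ss cc2 using a by (simp add: field_simps power2_eq_square power3_eq_cube)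
    finally have "(2 * sinh c / (cosh c)^3)\<^sup>2 = \<bar>b\<bar>\<^sup>2" using b by simp
    moreover have "0 \<le> 2 * sinh c / (cosh c)^3" using sn cosh_pos'[of c] by simp
    ultimately show ?thesis by (metis abs_ge_zero power2_abs power2_eq_iff_nonneg)
  qed
  show ?thesis
  proof (cases "0 \<le> b")
    case True
    show ?thesis by (rule exI[of _ c]) (use val True cc2 a in simp)
  next
    case False
    show ?thesis by (rule exI[of _ "-c"]) (use val False cc2 a in simp)
  qed
qed

lemma xi_props:
  fixes t :: real
  assumes ph: "is_phi \<sigma> \<phi>" and sp: "\<sigma> > 0"
  defines "f \<equiv> xi \<sigma> \<phi> t"
    and "f1 \<equiv> (\<lambda>s. 2*\<phi> (s - t)*deriv \<phi> (s - t) - 2*\<sigma>\<^sup>2*deriv \<phi> (s - t)/(\<phi> (s - t))^3)"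
  shows "(f has_real_derivative f1 s) (at s)"
    and "(f1 has_real_derivative Gt \<sigma> (f s)) (at s)"
    and "0 < f s \<and> f s \<le> 1 + 2*\<sigma>"
    and "(f1 s)\<^sup>2 = 4*((f s)\<^sup>2 - 4*\<sigma>\<^sup>2)*(1 + 2*\<sigma> - f s)"
proof -
  define X where "X \<equiv> (\<lambda>x. (\<phi> x)\<^sup>2 + \<sigma>\<^sup>2 / (\<phi> x)\<^sup>2)"
  define X1 where "X1 \<equiv> (\<lambda>x. 2*\<phi> x*deriv \<phi> x - 2*\<sigma>\<^sup>2*deriv \<phi> x/(\<phi> x)^3)"
  note P = X_props[OF ph sp, folded X_def X1_def]
  have fe: "f = (\<lambda>s. X (s + -t))" unfolding f_def X_def xi_def by simp
  have f1e: "f1 = (\<lambda>s. X1 (s + -t))" unfolding f1_def X1_def by simp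
  show "(f has_real_derivative f1 s) (at s)"
    unfolding fe f1e using DERIV_shift[THEN iffD1, OF P(1)[of "s + -t"]] by (simp add: X_def X1_def)
  show "(f1 has_real_derivative Gt \<sigma> (f s)) (at s)"
    unfolding fe f1e using DERIV_shift[THEN iffD1, OF P(2)[of "s + -t"]] by (simp add: X_def X1_def)
  show "0 < f s \<and> f s \<le> 1 + 2*\<sigma>" unfolding fe using P(3)[of "s + -t"] by (simp add: X_def)
  show "(f1 s)\<^sup>2 = 4*((f s)\<^sup>2 - 4*\<sigma>\<^sup>2)*(1 + 2*\<sigma> - f s)" unfolding fe f1e using P(4)[of "s + -t"] by (simp add: X_def X1_def)
qed

lemma Gt_diff:
  assumes "0 < \<sigma>" "0 \<le> y" "y \<le> 2"
  shows "\<bar>Gt \<sigma> y - Gt 0 y\<bar> \<le> 16*\<sigma> + 8*\<sigma>\<^sup>2"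
proof -
  have e: "Gt \<sigma> y - Gt 0 y = 8*\<sigma>*y + 8*\<sigma>\<^sup>2" unfolding Gt_def by (simp add: algebra_simps)
  have "0 \<le> 8*\<sigma>*y" using assms by simp
  moreover have "8*\<sigma>*y \<le> 16*\<sigma>" using assms by simp
  ultimately show ?thesis unfolding e by simp
qed

lemma Gt_lip:
  assumes "0 \<le> y" "y \<le> 2" "0 \<le> z" "z \<le> 2"
  shows "\<bar>Gt 0 y - Gt 0 z\<bar> \<le> 20*\<bar>y - z\<bar>"
proof -
  have e: "Gt 0 y - Gt 0 z = (y - z) * (4 - 6*(y+z))" unfolding Gt_def by (simp add: algebra_simps power2_eq_square)
  have "\<bar>4 - 6*(y+z)\<bar> \<le> 20" using assms by simp
  then have "\<bar>y - z\<bar> * \<bar>4 - 6*(y+z)\<bar> \<le> \<bar>y - z\<bar> * 20" by (rule mult_left_mono) simp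
  then show ?thesis unfolding e abs_mult by simp
qed

theorem lemma4p4:
  fixes \<phi> :: "real \<Rightarrow> real \<Rightarrow> real" and t :: "real \<Rightarrow> real" and \<tau> :: "nat \<Rightarrow> real"
  assumes "\<And>\<sigma>. \<sigma> > 0 \<Longrightarrow> is_phi \<sigma> (\<phi> \<sigma>)"
    and "\<And>n. \<tau> n > 0"
    and "\<tau> \<longlonglongrightarrow> 0"
  shows "\<exists>r. strict_mono r \<and>
    ((\<exists>s0. unif_compact_conv (\<lambda>n. xi (\<tau> (r n)) (\<phi> (\<tau> (r n))) (t (\<tau> (r n))))
                              (\<lambda>s. 1 / (cosh (s - s0))\<^sup>2))
     \<or> unif_compact_conv (\<lambda>n. xi (\<tau> (r n)) (\<phi> (\<tau> (r n))) (t (\<tau> (r n)))) (\<lambda>s. 0))"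
proof -
  define F where "F n = xi (\<tau> n) (\<phi> (\<tau> n)) (t (\<tau> n))" for n
  define F1 where "F1 n = (\<lambda>s. 2*\<phi> (\<tau> n) (s - t (\<tau> n))*deriv (\<phi> (\<tau> n)) (s - t (\<tau> n))
      - 2*(\<tau> n)\<^sup>2*deriv (\<phi> (\<tau> n)) (s - t (\<tau> n))/(\<phi> (\<tau> n) (s - t (\<tau> n)))^3)" for n
  have ph: "is_phi (\<tau> n) (\<phi> (\<tau> n))" for n using assms(1) assms(2) by blast
  have FD: "(F n has_real_derivative F1 n s) (at s)" for n s
    unfolding F_def F1_def by (rule xi_props(1)[OF ph assms(2)])
  have FD1: "(F1 n has_real_derivative Gt (\<tau> n) (F n s)) (at s)" for n s
    unfolding F_def F1_def by (rule xi_props(2)[OF ph assms(2)])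
  have FB: "0 < F n s \<and> F n s \<le> 1 + 2*\<tau> n" for n s
    unfolding F_def by (rule xi_props(3)[OF ph assms(2)])
  have FE: "(F1 n s)\<^sup>2 = 4*((F n s)\<^sup>2 - 4*(\<tau> n)\<^sup>2)*(1 + 2*\<tau> n - F n s)" for n s
    unfolding F_def F1_def by (rule xi_props(4)[OF ph assms(2)])
  obtain B where B: "0 < B" "\<And>n. norm (\<tau> n) \<le> B"
    using BseqE[OF convergent_imp_Bseq[OF convergentI[OF assms(3)]]] by blast
  define M where "M = 1 + 2*B"
  have M1: "1 \<le> M" using B unfolding M_def by simp
  have tB: "\<tau> n \<le> B" for n using B(2)[of n] by simp
  have Fb: "\<bar>F n 0\<bar> \<le> M" for n using FB[of n 0] tB[of n] unfolding M_def by simp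
  have F1b: "\<bar>F1 n 0\<bar> \<le> sqrt (4*M^3)" for n
  proof -
    have c0: "0 \<le> 1 + 2*\<tau> n - F n 0" using FB[of n 0] by simp
    have c1: "1 + 2*\<tau> n - F n 0 \<le> M" using FB[of n 0] tB[of n] unfolding M_def by simp
    have "(F n 0)\<^sup>2 - 4*(\<tau> n)\<^sup>2 \<le> M\<^sup>2"
    proof -
      have "\<bar>F n 0\<bar>\<^sup>2 \<le> M\<^sup>2" using Fb[of n] by (rule power_mono) simp
      then have "(F n 0)\<^sup>2 \<le> M\<^sup>2" by simp
      moreover have "0 \<le> 4*(\<tau> n)\<^sup>2" by simp
      ultimately show ?thesis by linarith
    qed
    then have "((F n 0)\<^sup>2 - 4*(\<tau> n)\<^sup>2)*(1 + 2*\<tau> n - F n 0) \<le> M\<^sup>2 * (1 + 2*\<tau> n - F n 0)"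
      using c0 by (rule mult_right_mono)
    also have "\<dots> \<le> M\<^sup>2 * M" using c1 by (rule mult_left_mono) simp
    finally have P: "((F n 0)\<^sup>2 - 4*(\<tau> n)\<^sup>2)*(1 + 2*\<tau> n - F n 0) \<le> M\<^sup>2 * M" .
    have "(F1 n 0)\<^sup>2 = 4*(((F n 0)\<^sup>2 - 4*(\<tau> n)\<^sup>2)*(1 + 2*\<tau> n - F n 0))" using FE[of n 0] by simp
    also have "\<dots> \<le> 4*(M\<^sup>2 * M)" using P by simp
    also have "\<dots> = 4*M^3" by (simp add: power2_eq_square power3_eq_cube)
    finally have "(F1 n 0)\<^sup>2 \<le> 4*M^3" .
    then have "sqrt ((F1 n 0)\<^sup>2) \<le> sqrt (4*M^3)" by (rule real_sqrt_le_mono)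
    then show ?thesis by simp
  qed
  define v where "v n = (F n 0, F1 n 0)" for n
  have "range v \<subseteq> cball 0 M \<times> cball 0 (sqrt (4*M^3))"
    using Fb F1b unfolding v_def by (auto simp: dist_real_def)
  moreover have "bounded (cball (0::real) M \<times> cball (0::real) (sqrt (4*M^3)))"
    by (intro bounded_Times bounded_cball)
  ultimately have "bounded (range v)" using bounded_subset by blast
  then obtain l r where r: "strict_mono r" and lr: "(v \<circ> r) \<longlonglongrightarrow> l"
    using bounded_imp_convergent_subsequence by blast
  define a where "a = fst l"
  define b where "b = snd l"
  have ha: "(\<lambda>n. F (r n) 0) \<longlonglongrightarrow> a" using tendsto_fst[OF lr] unfolding a_def v_def by simp
  have hb: "(\<lambda>n. F1 (r n) 0) \<longlonglongrightarrow> b" using tendsto_snd[OF lr] unfolding b_def v_def by simp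
  have ht: "(\<lambda>n. \<tau> (r n)) \<longlonglongrightarrow> 0" using LIMSEQ_subseq_LIMSEQ[OF assms(3) r] by (simp add: o_def)
  have a0: "0 \<le> a" by (rule LIMSEQ_le_const[OF ha]) (use FB in \<open>auto intro: less_imp_le\<close>)
  have a1: "a \<le> 1"
  proof -
    have "(\<lambda>n. 1 + 2*\<tau> (r n)) \<longlonglongrightarrow> 1 + 2*0" by (intro tendsto_intros ht)
    then show ?thesis by (intro LIMSEQ_le[OF ha]) (use FB in auto)
  qed
  have ab: "b\<^sup>2 = 4*a\<^sup>2*(1-a)"
  proof -
    have "(\<lambda>n. (F1 (r n) 0)\<^sup>2) \<longlonglongrightarrow> b\<^sup>2" by (intro tendsto_intros hb)
    moreover have "(\<lambda>n. (F1 (r n) 0)\<^sup>2) \<longlonglongrightarrow> 4*(a\<^sup>2 - 4*0\<^sup>2)*(1 + 2*0 - a)"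
      unfolding FE by (intro tendsto_intros ha ht)
    ultimately show ?thesis using LIMSEQ_unique by fastforce
  qed
  have conv: "unif_compact_conv (\<lambda>n. xi (\<tau> (r n)) (\<phi> (\<tau> (r n))) (t (\<tau> (r n)))) g"
    if gD: "\<And>x. (g has_real_derivative g1 x) (at x)"
      and gD1: "\<And>x. (g1 has_real_derivative Gt 0 (g x)) (at x)"
      and gB: "\<And>x. 0 \<le> g x \<and> g x \<le> 2" and g0: "g 0 = a" and g10: "g1 0 = b" for g g1
    unfolding unif_compact_conv_def F_def[symmetric]
  proof (intro allI impI)
    fix K :: "real set" assume "compact K"
    then have "bounded K" by (rule compact_imp_bounded)
    then obtain R where R0: "\<forall>x\<in>K. norm x \<le> R" unfolding bounded_iff by blast
    then have R: "\<And>x. x \<in> K \<Longrightarrow> \<bar>x\<bar> \<le> R" by simp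
    show "uniform_limit K (\<lambda>n. F (r n)) g sequentially"
      unfolding uniform_limit_iff
    proof (intro allI impI)
      fix e :: real assume e: "0 < e"
      define \<delta> where "\<delta> n = 16*\<tau> (r n) + 8*(\<tau> (r n))\<^sup>2" for n
      define Q where "Q n = ((F (r n) 0 - g 0)\<^sup>2 + (F1 (r n) 0 - g1 0)\<^sup>2 + (\<delta> n)\<^sup>2) * exp (22*R)" for n
      have "Q \<longlonglongrightarrow> ((a - a)\<^sup>2 + (b - b)\<^sup>2 + (16*0 + 8*0\<^sup>2)\<^sup>2) * exp (22*R)"
        unfolding Q_def \<delta>_def g0 g10 by (intro tendsto_intros ha hb ht)
      then have "Q \<longlonglongrightarrow> 0" by simp
      then have ev1: "\<forall>\<^sub>F n in sequentially. Q n < e\<^sup>2" using e by (intro order_tendstoD(2)) auto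
      have ev2: "\<forall>\<^sub>F n in sequentially. \<tau> (r n) < 1/2" using ht by (intro order_tendstoD(2)) auto
      show "\<forall>\<^sub>F n in sequentially. \<forall>x\<in>K. dist (F (r n) x) (g x) < e"
        using ev1 ev2
      proof eventually_elim
        case (elim n)
        show ?case
        proof
          fix x assume xK: "x \<in> K"
          have st: "(F (r n) x - g x)\<^sup>2 + (F1 (r n) x - g1 x)\<^sup>2
              \<le> ((F (r n) 0 - g 0)\<^sup>2 + (F1 (r n) 0 - g1 0)\<^sup>2 + (\<delta> n)\<^sup>2) * exp (22*\<bar>x\<bar>)"
          proof (rule stab[where ?G1.0 = "Gt (\<tau> (r n))" and ?G0.0 = "Gt 0"])
            show "\<And>x. (F (r n) has_real_derivative F1 (r n) x) (at x)" by (rule FD)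
            show "\<And>x. (F1 (r n) has_real_derivative Gt (\<tau> (r n)) (F (r n) x)) (at x)" by (rule FD1)
            show "\<And>x. (g has_real_derivative g1 x) (at x)" by (rule gD)
            show "\<And>x. (g1 has_real_derivative Gt 0 (g x)) (at x)" by (rule gD1)
            show "0 \<le> F (r n) y \<and> F (r n) y \<le> 2" for y
            proof -
              have "0 < F (r n) y" "F (r n) y \<le> 1 + 2*\<tau> (r n)" using FB[of "r n" y] by auto
              then show ?thesis using elim(2) by auto
            qed
            show "\<And>x. 0 \<le> g x \<and> g x \<le> 2" by (rule gB)
            show "\<And>y. 0 \<le> y \<Longrightarrow> y \<le> 2 \<Longrightarrow> \<bar>Gt (\<tau> (r n)) y - Gt 0 y\<bar> \<le> \<delta> n"
              unfolding \<delta>_def by (rule Gt_diff[OF assms(2)])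
            show "\<And>y z. 0 \<le> y \<Longrightarrow> y \<le> 2 \<Longrightarrow> 0 \<le> z \<Longrightarrow> z \<le> 2 \<Longrightarrow> \<bar>Gt 0 y - Gt 0 z\<bar> \<le> 20*\<bar>y - z\<bar>"
              by (rule Gt_lip)
          qed
          have "exp (22*\<bar>x\<bar>) \<le> exp (22*R)" using R[OF xK] by simp
          then have "((F (r n) 0 - g 0)\<^sup>2 + (F1 (r n) 0 - g1 0)\<^sup>2 + (\<delta> n)\<^sup>2) * exp (22*\<bar>x\<bar>) \<le> Q n"
            unfolding Q_def by (intro mult_left_mono) auto
          moreover have "0 \<le> (F1 (r n) x - g1 x)\<^sup>2" by simp
          ultimately have "(F (r n) x - g x)\<^sup>2 < e\<^sup>2" using st elim(1) by linarith
          then have "\<bar>F (r n) x - g x\<bar>\<^sup>2 < e\<^sup>2" by simp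
          then have "\<bar>F (r n) x - g x\<bar> < e" by (rule power_less_imp_less_base) (use e in linarith)
          then show "dist (F (r n) x) (g x) < e" by (simp add: dist_real_def)
        qed
      qed
    qed
  qed
  show ?thesis
  proof (cases "a = 0")
    case True
    then have "b = 0" using ab by simp
    have "unif_compact_conv (\<lambda>n. xi (\<tau> (r n)) (\<phi> (\<tau> (r n))) (t (\<tau> (r n)))) (\<lambda>s. 0)"
    proof (rule conv[where ?g1.0 = "\<lambda>s. 0"])
      show "((\<lambda>s. 0) has_real_derivative 0) (at x)" for x by (rule DERIV_const)
      show "((\<lambda>s. 0) has_real_derivative Gt 0 0) (at x)" for x
        unfolding Gt_def by simp
      show "0 \<le> (0::real) \<and> (0::real) \<le> 2" by simp
      show "(0::real) = a" using True by simp
      show "(0::real) = b" using \<open>b = 0\<close> by simp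
    qed
    then show ?thesis by (intro exI[of _ r] conjI[OF r] disjI2)
  next
    case False
    then have ap: "0 < a" using a0 by simp
    obtain s0 where s0: "1 / (cosh (0 - s0))\<^sup>2 = a" "-2 * sinh (0 - s0) / (cosh (0 - s0))^3 = b"
      using sech_data[OF ap a1 ab] by blast
    have "unif_compact_conv (\<lambda>n. xi (\<tau> (r n)) (\<phi> (\<tau> (r n))) (t (\<tau> (r n)))) (\<lambda>s. 1 / (cosh (s - s0))\<^sup>2)"
    proof (rule conv[where ?g1.0 = "\<lambda>s. -2 * sinh (s - s0) / (cosh (s - s0))^3"])
      show "((\<lambda>s. 1 / (cosh (s - s0))\<^sup>2) has_real_derivative -2 * sinh (x - s0) / (cosh (x - s0))^3) (at x)" for x
        by (rule sech_props(1))
      show "((\<lambda>s. -2 * sinh (s - s0) / (cosh (s - s0))^3) has_real_derivative Gt 0 (1 / (cosh (x - s0))\<^sup>2)) (at x)" for x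
        by (rule sech_props(2))
      show "0 \<le> 1 / (cosh (x - s0))\<^sup>2 \<and> 1 / (cosh (x - s0))\<^sup>2 \<le> 2" for x
        by (rule sech_props(3))
      show "1 / (cosh (0 - s0))\<^sup>2 = a" by (rule s0(1))
      show "-2 * sinh (0 - s0) / (cosh (0 - s0))^3 = b" by (rule s0(2))
    qed
    then show ?thesis by (intro exI[of _ r] conjI[OF r] disjI1 exI[of _ s0])
  qed
qed

end
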